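(* For every graph $G$ and every integer $r\ge 2$, $$\mathrm{glm}(G)\le \mathrm{had}(G\square K_2)\le 3\,\mathrm{had}_r(G),$$ and if $r$ is even then $$\mathrm{glm}(G)\le \mathrm{had}(G\square K_2)\le 2\,\mathrm{had}_r(G)\le 2\,\mathrm{had}_f(G).$$
   Context: $\mathrm{had}(H)$ is the largest $t$ such that $K_t$ is a minor of $H$. $G\square K_2$ is the Cartesian product: two disjoint copies of $G$ with an edge between each pair of corresponding vertices. A grid-like-minor of order $t$ in $G$ is a set $\mathcal P$ of paths in $G$ whose intersection graph (vertices $\mathcal P$, two paths adjacent if they share a vertex) is bipartite and contains a $K_t$-minor; $\mathrm{glm}(G)$ is the maximum order of a grid-like-minor of $G$. Two subgraphs touch if they share a vertex or an edge joins them; a bramble is a set of pairwise touching connected subgraphs. The fractional Hadwiger number $\mathrm{had}_f(G)$ is the maximum $h$ for which there is a bramble $\mathcal B$ in $G$ and a weight function $w:\mathcal B\to\mathbb R_{\ge0}$ with $h=\sum_{X\in\mathcal B}w(X)$ and, for each vertex $v$, the total weight of elements of $\mathcal B$ containing $v$ at most $1$. For a positive integer $r$, $\mathrm{had}_r(G)$ is defined identically except that all weights must be multiples of $\frac1r$. *)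

theory Defs
  imports Main Complex_Main
begin

definition graph :: "'a set \<Rightarrow> ('a \<times> 'a) set \<Rightarrow> bool" where
  "graph V E \<longleftrightarrow> finite V \<and> E \<subseteq> V \<times> V \<and> sym E \<and> (\<forall>v. (v, v) \<notin> E)"

definition connected_set :: "('a \<times> 'a) set \<Rightarrow> 'a set \<Rightarrow> bool" where
  "connected_set E S \<longleftrightarrow> S \<noteq> {} \<and> (\<forall>x\<in>S. \<forall>y\<in>S. (x, y) \<in> (E \<inter> (S \<times> S))\<^sup>*)"

definition has_K_minor :: "'a set \<Rightarrow> ('a \<times> 'a) set \<Rightarrow> nat \<Rightarrow> bool" where
  "has_K_minor V E t \<longleftrightarrow> (\<exists>B :: nat \<Rightarrow> 'a set.
      (\<forall>i<t. B i \<subseteq> V \<and> connected_set E (B i)) \<and>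
      (\<forall>i<t. \<forall>j<t. i \<noteq> j \<longrightarrow> B i \<inter> B j = {}) \<and>
      (\<forall>i<t. \<forall>j<t. i \<noteq> j \<longrightarrow> (\<exists>x\<in>B i. \<exists>y\<in>B j. (x, y) \<in> E)))"

definition had :: "'a set \<Rightarrow> ('a \<times> 'a) set \<Rightarrow> nat" where
  "had V E = Max {t. has_K_minor V E t}"

definition prodK2_V :: "'a set \<Rightarrow> ('a \<times> bool) set" where
  "prodK2_V V = V \<times> UNIV"

definition prodK2_E :: "'a set \<Rightarrow> ('a \<times> 'a) set \<Rightarrow> (('a \<times> bool) \<times> ('a \<times> bool)) set" where
  "prodK2_E V E = {((u, b), (v, b)) | u v b. (u, v) \<in> E}
                 \<union> {((u, b), (u, \<not> b)) | u b. u \<in> V}"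

definition path_list :: "'a set \<Rightarrow> ('a \<times> 'a) set \<Rightarrow> 'a list \<Rightarrow> bool" where
  "path_list V E xs \<longleftrightarrow> xs \<noteq> [] \<and> distinct xs \<and> set xs \<subseteq> V \<and>
     (\<forall>i. Suc i < length xs \<longrightarrow> (xs ! i, xs ! Suc i) \<in> E)"

definition path_sg :: "'a list \<Rightarrow> 'a set \<times> ('a \<times> 'a) set" where
  "path_sg xs = (set xs,
     {(xs ! i, xs ! Suc i) | i. Suc i < length xs} \<union> {(xs ! Suc i, xs ! i) | i. Suc i < length xs})"

definition is_path :: "'a set \<Rightarrow> ('a \<times> 'a) set \<Rightarrow> 'a set \<times> ('a \<times> 'a) set \<Rightarrow> bool" where
  "is_path V E p \<longleftrightarrow> (\<exists>xs. path_list V E xs \<and> p = path_sg xs)"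

definition inter_E :: "('a set \<times> ('a \<times> 'a) set) set \<Rightarrow>
    (('a set \<times> ('a \<times> 'a) set) \<times> ('a set \<times> ('a \<times> 'a) set)) set" where
  "inter_E P = {(p, q). p \<in> P \<and> q \<in> P \<and> p \<noteq> q \<and> fst p \<inter> fst q \<noteq> {}}"

definition bipartite :: "'b set \<Rightarrow> ('b \<times> 'b) set \<Rightarrow> bool" where
  "bipartite V E \<longleftrightarrow> (\<exists>A. A \<subseteq> V \<and> (\<forall>(x, y)\<in>E. x \<in> A \<longleftrightarrow> y \<notin> A))"

definition grid_like_minor :: "'a set \<Rightarrow> ('a \<times> 'a) set \<Rightarrow> ('a set \<times> ('a \<times> 'a) set) set \<Rightarrow> nat \<Rightarrow> bool" where
  "grid_like_minor V E P t \<longleftrightarrow> (\<forall>p\<in>P. is_path V E p) \<and>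
      bipartite P (inter_E P) \<and> has_K_minor P (inter_E P) t"

definition glm :: "'a set \<Rightarrow> ('a \<times> 'a) set \<Rightarrow> nat" where
  "glm V E = Max {t. \<exists>P. grid_like_minor V E P t}"

definition conn_subgraph :: "'a set \<Rightarrow> ('a \<times> 'a) set \<Rightarrow> 'a set \<times> ('a \<times> 'a) set \<Rightarrow> bool" where
  "conn_subgraph V E X \<longleftrightarrow> (case X of (S, F) \<Rightarrow>
     S \<noteq> {} \<and> S \<subseteq> V \<and> F \<subseteq> E \<inter> (S \<times> S) \<and> sym F \<and> (\<forall>x\<in>S. \<forall>y\<in>S. (x, y) \<in> F\<^sup>*))"

definition touch :: "('a \<times> 'a) set \<Rightarrow> 'a set \<times> ('a \<times> 'a) set \<Rightarrow> 'a set \<times> ('a \<times> 'a) set \<Rightarrow> bool" where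
  "touch E X Y \<longleftrightarrow> fst X \<inter> fst Y \<noteq> {} \<or> (\<exists>x\<in>fst X. \<exists>y\<in>fst Y. (x, y) \<in> E)"

definition bramble :: "'a set \<Rightarrow> ('a \<times> 'a) set \<Rightarrow> ('a set \<times> ('a \<times> 'a) set) set \<Rightarrow> bool" where
  "bramble V E \<B> \<longleftrightarrow> (\<forall>X\<in>\<B>. conn_subgraph V E X) \<and> (\<forall>X\<in>\<B>. \<forall>Y\<in>\<B>. touch E X Y)"

definition admissible_weight :: "'a set \<Rightarrow> ('a set \<times> ('a \<times> 'a) set) set \<Rightarrow>
     ('a set \<times> ('a \<times> 'a) set \<Rightarrow> real) \<Rightarrow> bool" where
  "admissible_weight V \<B> w \<longleftrightarrow> finite \<B> \<and> (\<forall>X\<in>\<B>. w X \<ge> 0) \<and>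
     (\<forall>v\<in>V. (\<Sum>X\<in>{X\<in>\<B>. v \<in> fst X}. w X) \<le> 1)"

definition had_f :: "'a set \<Rightarrow> ('a \<times> 'a) set \<Rightarrow> real" where
  "had_f V E = Sup {h. \<exists>\<B> w. bramble V E \<B> \<and> admissible_weight V \<B> w \<and> h = (\<Sum>X\<in>\<B>. w X)}"

definition had_r :: "nat \<Rightarrow> 'a set \<Rightarrow> ('a \<times> 'a) set \<Rightarrow> real" where
  "had_r r V E = Sup {h. \<exists>\<B> w. bramble V E \<B> \<and> admissible_weight V \<B> w \<and>
       (\<forall>X\<in>\<B>. \<exists>k::nat. w X = real k / real r) \<and> h = (\<Sum>X\<in>\<B>. w X)}"

end

theory Submission
  imports Defs
begin


lemma K0: "has_K_minor V E 0" by (auto simp: has_K_minor_def)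

lemma K_minor_le_card:
  assumes "finite V" "has_K_minor V E t" shows "t \<le> card V"
proof -
  obtain B where B: "\<forall>i<t. B i \<subseteq> V \<and> connected_set E (B i)"
    "\<forall>i<t. \<forall>j<t. i\<noteq>j \<longrightarrow> B i \<inter> B j = {}" using assms(2) unfolding has_K_minor_def by blast
  define f where "f i = (SOME x. x \<in> B i)" for i
  have f: "f i \<in> B i" if "i<t" for i using B(1) that unfolding connected_set_def f_def
    by (metis some_in_eq)
  have "inj_on f {..<t}" using f B(2) unfolding inj_on_def by (metis disjoint_iff lessThan_iff)
  moreover have "f ` {..<t} \<subseteq> V" using f B(1) by auto
  ultimately have "card {..<t} \<le> card V" using card_inj_on_le assms(1) by blast
  thus ?thesis by simp
qed

lemma had_props:
  assumes "finite V"
  shows "has_K_minor V E (had V E)" "has_K_minor V E t \<Longrightarrow> t \<le> had V E"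
proof -
  have fin: "finite {t. has_K_minor V E t}"
    by (rule finite_subset[of _ "{..card V}"]) (auto intro: K_minor_le_card[OF assms])
  have ne: "{t. has_K_minor V E t} \<noteq> {}" using K0 by blast
  show "has_K_minor V E (had V E)" unfolding had_def using Max_in[OF fin ne] by simp
  show "has_K_minor V E t \<Longrightarrow> t \<le> had V E" unfolding had_def using fin by simp
qed

lemma bramble_sum_le:
  assumes "finite V" "bramble V E Bs" "admissible_weight V Bs w"
  shows "sum w Bs \<le> real (card V)"
proof -
  have fin: "finite Bs" and nn: "\<forall>X\<in>Bs. w X \<ge> 0"
    and ld: "\<forall>v\<in>V. (\<Sum>X\<in>{X\<in>Bs. v \<in> fst X}. w X) \<le> 1"
    using assms(3) by (auto simp: admissible_weight_def)
  have ne: "fst X \<noteq> {} \<and> fst X \<subseteq> V" if "X\<in>Bs" for X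
    using assms(2) that unfolding bramble_def conn_subgraph_def by (cases X) auto
  have "w X \<le> (\<Sum>v\<in>V. if v \<in> fst X then w X else 0)" if XB: "X\<in>Bs" for X
  proof -
    obtain v0 where v0: "v0 \<in> fst X" using ne XB by blast
    have "(if v0 \<in> fst X then w X else 0) \<le> (\<Sum>v\<in>V. if v \<in> fst X then w X else 0)"
      by (rule member_le_sum) (use v0 ne[OF XB] XB nn assms(1) in auto)
    thus ?thesis using v0 by simp
  qed
  then have "sum w Bs \<le> (\<Sum>X\<in>Bs. \<Sum>v\<in>V. if v\<in>fst X then w X else 0)" by (rule sum_mono)
  also have "\<dots> = (\<Sum>v\<in>V. \<Sum>X\<in>Bs. if v\<in>fst X then w X else 0)" by (rule sum.swap)
  also have "\<dots> = (\<Sum>v\<in>V. \<Sum>X\<in>{X\<in>Bs. v\<in>fst X}. w X)" using fin by (simp add: sum.inter_filter)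
  also have "\<dots> \<le> (\<Sum>v\<in>V. 1)" using ld by (intro sum_mono) auto
  finally show ?thesis by simp
qed

lemma fiber_sum: "finite S \<Longrightarrow> (\<Sum>y\<in>g`S. card {x\<in>S. g x = y}) = card S"
  using sum.image_gen[of S "\<lambda>_. (1::nat)" g] by simp

definition setR where "setR r V E = {h. \<exists>\<B> w. bramble V E \<B> \<and> admissible_weight V \<B> w \<and>
       (\<forall>X\<in>\<B>. \<exists>k::nat. w X = real k / real r) \<and> h = (\<Sum>X\<in>\<B>. w X)}"
definition setF where "setF V E = {h. \<exists>\<B> w. bramble V E \<B> \<and> admissible_weight V \<B> w \<and> h = (\<Sum>X\<in>\<B>. w X)}"

lemma setF_props: assumes "finite V" shows "bdd_above (setF V E)" "0 \<in> setF V E"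
proof -
  show "bdd_above (setF V E)" unfolding setF_def bdd_above_def
    using bramble_sum_le[OF assms] by blast
  show "0 \<in> setF V E" unfolding setF_def
    by (rule CollectI, rule exI[of _ "{}"], rule exI[of _ "\<lambda>_. 0"])
       (auto simp: bramble_def admissible_weight_def)
qed

lemma setR_sub: "setR r V E \<subseteq> setF V E" unfolding setR_def setF_def by blast
lemma setR0: "0 \<in> setR r V E" unfolding setR_def
    by (rule CollectI, rule exI[of _ "{}"], rule exI[of _ "\<lambda>_. 0"])
       (auto simp: bramble_def admissible_weight_def)

lemma hadr_le_hadf: assumes "finite V" shows "had_r r V E \<le> had_f V E"
proof -
  have "Sup (setR r V E) \<le> Sup (setF V E)"
    by (rule cSup_subset_mono) (use setR0[of r V E] setR_sub[of r V E] setF_props[OF assms, of E] in blast)+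
  thus ?thesis unfolding had_r_def had_f_def setR_def setF_def .
qed

lemma proj_conn:
  assumes "(p, q) \<in> (prodK2_E V E \<inter> (S \<times> S))\<^sup>*"
  shows "(fst p, fst q) \<in> (E \<inter> (fst ` S \<times> fst ` S))\<^sup>*"
  using assms
proof (induction rule: rtrancl_induct)
  case base then show ?case by simp
next
  case (step y z)
  from step.hyps(2) have yz: "y \<in> S" "z \<in> S" "(y,z) \<in> prodK2_E V E" by auto
  show ?case
  proof (cases "fst y = fst z")
    case True then show ?thesis using step.IH by simp
  next
    case False
    then have "(fst y, fst z) \<in> E" using yz(3) by (auto simp: prodK2_E_def)
    then have "(fst y, fst z) \<in> E \<inter> (fst ` S \<times> fst ` S)" using yz by auto
    then show ?thesis using step.IH by (rule rtrancl_into_rtrancl[rotated])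
  qed
qed




lemma part2:
  assumes G: "graph V E" and r: "r \<ge> 2"
    and K: "has_K_minor (prodK2_V V) (prodK2_E V E) t"
  shows "real t * real (r div 2) / real r \<le> had_r r V E"
proof -
  obtain B where B1: "\<forall>i<t. B i \<subseteq> prodK2_V V \<and> connected_set (prodK2_E V E) (B i)"
    and B2: "\<forall>i<t. \<forall>j<t. i\<noteq>j \<longrightarrow> B i \<inter> B j = {}"
    and B3: "\<forall>i<t. \<forall>j<t. i \<noteq> j \<longrightarrow> (\<exists>x\<in>B i. \<exists>y\<in>B j. (x, y) \<in> prodK2_E V E)"
    using K unfolding has_K_minor_def by blast
  have finV: "finite V" and symE: "sym E" and EV: "E \<subseteq> V \<times> V" using G by (auto simp: graph_def)
  define Y where "Y i = fst ` B i" for i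
  define Z where "Z i = (Y i, E \<inter> (Y i \<times> Y i))" for i
  define Bs where "Bs = Z ` {..<t}"
  define q where "q = real (r div 2) / real r"
  define w where "w X = real (card {i. i<t \<and> Z i = X}) * q" for X
  have Yne: "Y i \<noteq> {}" "Y i \<subseteq> V" if "i<t" for i
    using B1 that unfolding Y_def connected_set_def prodK2_V_def by fastforce+
  have conn: "conn_subgraph V E (Z i)" if "i<t" for i
  proof -
    have "(x, y) \<in> (E \<inter> (Y i \<times> Y i))\<^sup>*" if "x \<in> Y i" "y \<in> Y i" for x y
    proof -
      obtain p q where pq: "p \<in> B i" "q \<in> B i" "x = fst p" "y = fst q" using \<open>x\<in>Y i\<close> \<open>y\<in>Y i\<close> by (auto simp: Y_def)
      have "(p, q) \<in> (prodK2_E V E \<inter> (B i \<times> B i))\<^sup>*" using B1 \<open>i<t\<close> pq unfolding connected_set_def by blast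
      from proj_conn[OF this] show ?thesis using pq by (simp add: Y_def)
    qed
    moreover have "sym (E \<inter> (Y i \<times> Y i))" using symE by (auto simp: sym_def)
    ultimately show ?thesis using Yne[OF that] by (auto simp: conn_subgraph_def Z_def)
  qed
  have touchZ: "touch E (Z i) (Z j)" if ij: "i<t" "j<t" for i j
  proof (cases "i = j")
    case True then show ?thesis using Yne[OF ij(1)] by (auto simp: touch_def Z_def)
  next
    case False
    then obtain x y where xy: "x \<in> B i" "y \<in> B j" "(x,y) \<in> prodK2_E V E" using B3 ij by blast
    then have "fst x = fst y \<or> (fst x, fst y) \<in> E" by (auto simp: prodK2_E_def)
    then show ?thesis using xy by (auto simp: touch_def Z_def Y_def)
  qed
  have bram: "bramble V E Bs" unfolding bramble_def Bs_def using conn touchZ by auto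
  have finBs: "finite Bs" unfolding Bs_def by simp
  have qnn: "q \<ge> 0" unfolding q_def by simp
  have q2: "2 * q \<le> 1"
  proof -
    have "2 * (r div 2) \<le> r" by simp
    then have "real (2 * (r div 2)) \<le> real r" by linarith
    then show ?thesis using r unfolding q_def by (simp add: field_simps)
  qed
  have load: "(\<Sum>X\<in>{X\<in>Bs. v \<in> fst X}. w X) \<le> 1" if "v \<in> V" for v
  proof -
    define S where "S = {i. i<t \<and> v \<in> Y i}"
    have finS: "finite S" unfolding S_def by simp
    have img: "Z ` S = {X\<in>Bs. v \<in> fst X}" unfolding S_def Bs_def by (auto simp: Z_def)
    have "(\<Sum>X\<in>{X\<in>Bs. v \<in> fst X}. card {i. i<t \<and> Z i = X}) = (\<Sum>X\<in>Z ` S. card {i\<in>S. Z i = X})"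
      unfolding img[symmetric] by (rule sum.cong) (auto simp: S_def Z_def intro!: arg_cong[where f=card])
    also have "\<dots> = card S" by (rule fiber_sum[OF finS])
    finally have eq: "(\<Sum>X\<in>{X\<in>Bs. v \<in> fst X}. card {i. i<t \<and> Z i = X}) = card S" .
    have S2: "card S \<le> 2"
    proof -
      have sub: "S \<subseteq> {i. i<t \<and> (v,False) \<in> B i} \<union> {i. i<t \<and> (v,True) \<in> B i}"
        proof
          fix i assume "i \<in> S"
          then obtain b where "i<t" "(v,b) \<in> B i" unfolding S_def Y_def by force
          then show "i \<in> {i. i<t \<and> (v,False) \<in> B i} \<union> {i. i<t \<and> (v,True) \<in> B i}"
            by (cases b) auto
        qed
      have c1: "card {i. i<t \<and> (v,b) \<in> B i} \<le> 1" for b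
        proof -
        have "card {i. i<t \<and> (v,b) \<in> B i} \<le> Suc 0"
          by (subst card_le_Suc0_iff_eq) (simp, use B2 in blast)
        then show ?thesis by simp
      qed
      have "card S \<le> card ({i. i<t \<and> (v,False) \<in> B i} \<union> {i. i<t \<and> (v,True) \<in> B i})"
        by (rule card_mono[OF _ sub]) simp
      also have "\<dots> \<le> 2" using card_Un_le[of "{i. i<t \<and> (v,False) \<in> B i}" "{i. i<t \<and> (v,True) \<in> B i}"] c1[of False] c1[of True]
        by linarith
      finally show ?thesis .
    qed
    have "(\<Sum>X\<in>{X\<in>Bs. v \<in> fst X}. w X) = real (\<Sum>X\<in>{X\<in>Bs. v \<in> fst X}. card {i. i<t \<and> Z i = X}) * q"
      unfolding w_def by (simp add: sum_distrib_right[symmetric])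
    also have "\<dots> = real (card S) * q" using eq by simp
    also have "\<dots> \<le> 2 * q" using S2 qnn by (intro mult_right_mono) auto
    finally show ?thesis using q2 by linarith
  qed
  have adm: "admissible_weight V Bs w"
    unfolding admissible_weight_def
  proof (intro conjI ballI)
    fix X assume "X \<in> Bs" show "0 \<le> w X" unfolding w_def using qnn by simp
  qed (use finBs load in auto)
  have mult: "\<forall>X\<in>Bs. \<exists>k::nat. w X = real k / real r"
  proof
    fix X show "\<exists>k::nat. w X = real k / real r"
      by (rule exI[of _ "card {i. i<t \<and> Z i = X} * (r div 2)"]) (simp add: w_def q_def)
  qed
  have "(\<Sum>X\<in>Bs. card {i. i<t \<and> Z i = X}) = (\<Sum>X\<in>Z ` {..<t}. card {i\<in>{..<t}. Z i = X})"
    unfolding Bs_def by (rule sum.cong) auto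
  also have "\<dots> = t" using fiber_sum[of "{..<t}" Z] by simp
  finally have sumeq: "(\<Sum>X\<in>Bs. card {i. i<t \<and> Z i = X}) = t" .
  have "sum w Bs = real t * q" unfolding w_def
    by (simp only: sum_distrib_right[symmetric] of_nat_sum[symmetric] sumeq)
  then have "real t * q \<in> setR r V E" unfolding setR_def using bram adm mult by (intro CollectI exI[of _ Bs] exI[of _ w]) simp
  then have "real t * q \<le> Sup (setR r V E)"
    by (rule cSup_upper) (rule bdd_above_mono[OF setF_props(1)[OF finV] setR_sub])
  then show ?thesis unfolding had_r_def setR_def q_def by simp
qed




lemma path_conn:
  assumes "path_list V E xs" "R = prodK2_E V E \<inter> (C \<times> C)" "set xs \<times> {b} \<subseteq> C"
    and "x \<in> set xs" "y \<in> set xs" and symE: "sym E"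
  shows "((x,b),(y,b)) \<in> R\<^sup>*"
proof -
  have pl: "\<forall>i. Suc i < length xs \<longrightarrow> (xs ! i, xs ! Suc i) \<in> E" "xs \<noteq> []"
    using assms(1) by (auto simp: path_list_def)
  have edge: "((xs!k,b),(xs!Suc k,b)) \<in> R" "((xs!Suc k,b),(xs!k,b)) \<in> R" if "Suc k < length xs" for k
  proof -
    have e: "(xs ! k, xs ! Suc k) \<in> E" using pl that by blast
    have m: "(xs!k, b) \<in> C" "(xs!Suc k, b) \<in> C" using assms(3) that by auto
    have sE: "(xs ! Suc k, xs ! k) \<in> E" using e symE by (rule symD[rotated])
    show "((xs!k,b),(xs!Suc k,b)) \<in> R" using e m assms(2) by (auto simp: prodK2_E_def)
    show "((xs!Suc k,b),(xs!k,b)) \<in> R" using sE m assms(2) by (auto simp: prodK2_E_def)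
  qed
  have all: "((xs!0,b),(xs!k,b)) \<in> R\<^sup>* \<and> ((xs!k,b),(xs!0,b)) \<in> R\<^sup>*" if "k < length xs" for k
    using that
  proof (induction k)
    case 0 then show ?case by simp
  next
    case (Suc k)
    then have "k < length xs" by simp
    with Suc.IH edge[OF Suc.prems] show ?case
      by (meson rtrancl.rtrancl_into_rtrancl converse_rtrancl_into_rtrancl)
  qed
  obtain i j where "x = xs!i" "y = xs!j" "i < length xs" "j < length xs"
    using assms(4,5) by (metis in_set_conv_nth)
  then show ?thesis using all by (meson rtrancl_trans)
qed




lemma part1:
  assumes G: "graph V E" and GL: "grid_like_minor V E P t"
  shows "has_K_minor (prodK2_V V) (prodK2_E V E) t"
proof -
  have symE: "sym E" using G by (simp add: graph_def)
  have paths: "\<forall>p\<in>P. is_path V E p" and bip: "bipartite P (inter_E P)"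
    and KM: "has_K_minor P (inter_E P) t" using GL by (auto simp: grid_like_minor_def)
  obtain A where A: "A \<subseteq> P" "\<forall>(x, y)\<in>inter_E P. x \<in> A \<longleftrightarrow> y \<notin> A"
    using bip unfolding bipartite_def by blast
  obtain Bk where B1: "\<forall>i<t. Bk i \<subseteq> P \<and> connected_set (inter_E P) (Bk i)"
    and B2: "\<forall>i<t. \<forall>j<t. i\<noteq>j \<longrightarrow> Bk i \<inter> Bk j = {}"
    and B3: "\<forall>i<t. \<forall>j<t. i \<noteq> j \<longrightarrow> (\<exists>x\<in>Bk i. \<exists>y\<in>Bk j. (x, y) \<in> inter_E P)"
    using KM unfolding has_K_minor_def by blast
  define side where "side p = (p \<notin> A)" for p
  define C where "C i = (\<Union>p\<in>Bk i. fst p \<times> {side p})" for i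
  have pth: "\<exists>xs. path_list V E xs \<and> fst p = set xs" if pP: "p \<in> P" for p
  proof -
    obtain xs where "path_list V E xs" "p = path_sg xs" using paths pP unfolding is_path_def by blast
    then show ?thesis by (intro exI[of _ xs]) (simp add: path_sg_def)
  qed
  have adj: "side q = (\<not> side p) \<and> (\<exists>v. v \<in> fst p \<and> v \<in> fst q)" if "(p,q) \<in> inter_E P" for p q
  proof -
    have "p \<in> A \<longleftrightarrow> q \<notin> A" using that A(2) by blast
    moreover have "fst p \<inter> fst q \<noteq> {}" using that unfolding inter_E_def by blast
    ultimately show ?thesis unfolding side_def by blast
  qed
  have pV: "fst p \<subseteq> V" "fst p \<noteq> {}" if "p \<in> P" for p
    using pth[OF that] by (auto simp: path_list_def)
  let ?E = "prodK2_E V E"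
  have vert: "((v,b),(v,\<not>b)) \<in> ?E" if "v \<in> V" for v b using that by (auto simp: prodK2_E_def)
  have conn: "connected_set ?E (C i)" if it: "i<t" for i
  proof -
    define R where "R = ?E \<inter> (C i \<times> C i)"
    have BP: "Bk i \<subseteq> P" using B1 it by blast
    have inpath: "((x,side p),(y,side p)) \<in> R\<^sup>*" if pxy: "p \<in> Bk i" "x \<in> fst p" "y \<in> fst p" for p x y
    proof -
      obtain xs where xs: "path_list V E xs" "fst p = set xs" using pth BP pxy(1) by blast
      show ?thesis
        by (rule path_conn[OF xs(1) R_def, of "side p"]) (use xs pxy symE in \<open>auto simp: C_def\<close>)
    qed
    have chain: "\<forall>x\<in>fst p. \<forall>y\<in>fst q. ((x,side p),(y,side q)) \<in> R\<^sup>*"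
      if "(p,q) \<in> (inter_E P \<inter> (Bk i \<times> Bk i))\<^sup>*" "p \<in> Bk i" for p q
      using that(1)
    proof (induction rule: rtrancl_induct)
      case base then show ?case using inpath[OF that(2)] by blast
    next
      case (step q' q)
      have q'q: "(q',q) \<in> inter_E P" "q' \<in> Bk i" "q \<in> Bk i" using step.hyps(2) by auto
      obtain v where v: "v \<in> fst q'" "v \<in> fst q" and sd: "side q = (\<not> side q')" using adj[OF q'q(1)] by blast
      have vV: "v \<in> V" using pV(1)[of q] q'q(3) BP v by blast
      have e: "((v, side q'), (v, side q)) \<in> R" unfolding R_def using vert[OF vV, of "side q'"] sd v q'q
        by (auto simp: C_def)
      show ?case
      proof (intro ballI)
        fix x y assume x: "x \<in> fst p" and y: "y \<in> fst q"
        have "((x,side p),(v,side q')) \<in> R\<^sup>*" using step.IH x v by blast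
        also have "((v,side q'),(v,side q)) \<in> R\<^sup>*" using e by blast
        also have "((v,side q),(y,side q)) \<in> R\<^sup>*" using inpath[OF q'q(3) v(2) y] .
        finally show "((x,side p),(y,side q)) \<in> R\<^sup>*" .
      qed
    qed
    have ne: "C i \<noteq> {}"
    proof -
      obtain p where "p \<in> Bk i" using B1 it unfolding connected_set_def by blast
      then show ?thesis using pV(2)[of p] BP unfolding C_def by blast
    qed
    show ?thesis unfolding connected_set_def
    proof (intro conjI ne ballI)
      fix x y assume "x \<in> C i" "y \<in> C i"
      then obtain p q where pq: "p \<in> Bk i" "q \<in> Bk i" "fst x \<in> fst p" "snd x = side p"
        "fst y \<in> fst q" "snd y = side q" unfolding C_def by auto
      have "(p,q) \<in> (inter_E P \<inter> (Bk i \<times> Bk i))\<^sup>*" using B1 it pq unfolding connected_set_def by blast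
      from chain[OF this pq(1)] pq have "((fst x, snd x), (fst y, snd y)) \<in> R\<^sup>*" by simp
      then show "(x, y) \<in> (?E \<inter> (C i \<times> C i))\<^sup>*" unfolding R_def by simp
    qed
  qed
  have sub: "C i \<subseteq> prodK2_V V" if "i<t" for i
    using pV(1) B1 that unfolding C_def prodK2_V_def by blast
  have disj: "C i \<inter> C j = {}" if "i<t" "j<t" "i\<noteq>j" for i j
  proof (rule ccontr)
    assume "C i \<inter> C j \<noteq> {}"
    then obtain v b p q where pq: "p \<in> Bk i" "q \<in> Bk j" "v \<in> fst p" "v \<in> fst q" "side p = b" "side q = b"
      unfolding C_def by blast
    have "p \<noteq> q" using B2 that pq by blast
    moreover have "p \<in> P" "q \<in> P" using B1 that pq by blast+
    ultimately have "(p,q) \<in> inter_E P" using pq unfolding inter_E_def by auto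
    then show False using adj pq by blast
  qed
  have edges: "\<exists>x\<in>C i. \<exists>y\<in>C j. (x, y) \<in> ?E" if ij: "i<t" "j<t" "i\<noteq>j" for i j
  proof -
    obtain p q where pq: "p \<in> Bk i" "q \<in> Bk j" "(p,q) \<in> inter_E P" using B3 ij by blast
    obtain v where v: "v \<in> fst p" "v \<in> fst q" and sd: "side q = (\<not> side p)" using adj[OF pq(3)] by blast
    have "v \<in> V" using pV(1)[of p] pq B1 ij v by blast
    then have "((v, side p), (v, side q)) \<in> ?E" using vert sd by simp
    moreover have "(v, side p) \<in> C i" "(v, side q) \<in> C j" using pq v unfolding C_def by auto
    ultimately show ?thesis by blast
  qed
  show ?thesis unfolding has_K_minor_def
    by (rule exI[of _ C]) (use conn sub disj edges in blast)
qed


theorem lemma20: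
  fixes V :: "'a set" and E :: "('a \<times> 'a) set" and r :: nat
  assumes "graph V E" and "r \<ge> 2"
  shows "glm V E \<le> had (prodK2_V V) (prodK2_E V E)
         \<and> real (had (prodK2_V V) (prodK2_E V E)) \<le> 3 * had_r r V E
         \<and> (even r \<longrightarrow>
              real (had (prodK2_V V) (prodK2_E V E)) \<le> 2 * had_r r V E
              \<and> 2 * had_r r V E \<le> 2 * had_f V E)"
proof -
  have finV: "finite V" using assms(1) by (simp add: graph_def)
  have finV': "finite (prodK2_V V)" using finV by (simp add: prodK2_V_def)
  define h where "h = had (prodK2_V V) (prodK2_E V E)"
  have hK: "has_K_minor (prodK2_V V) (prodK2_E V E) h" unfolding h_def by (rule had_props(1)[OF finV'])
  have A: "glm V E \<le> h"
  proof -
    define S where "S = {t. \<exists>P. grid_like_minor V E P t}"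
    have le: "t \<le> h" if "t \<in> S" for t
      using that part1[OF assms(1)] had_props(2)[OF finV'] unfolding S_def h_def by blast
    have fin: "finite S" by (rule finite_subset[of _ "{..h}"]) (use le in auto)
    have "grid_like_minor V E {} 0"
      by (simp add: grid_like_minor_def bipartite_def inter_E_def K0)
    then have ne: "S \<noteq> {}" unfolding S_def by blast
    show ?thesis unfolding glm_def S_def[symmetric] using fin ne le by simp
  qed
  have r0: "real r > 0" using assms(2) by simp
  have B: "real h * real (r div 2) / real r \<le> had_r r V E" by (rule part2[OF assms hK])
  have r3n: "r \<le> 3 * (r div 2)" using assms(2) by linarith
  have r3: "real r \<le> 3 * real (r div 2)" using r3n by (metis of_nat_le_iff of_nat_mult of_nat_numeral)
  have "real h * real r \<le> real h * (3 * real (r div 2))" using r3 by (intro mult_left_mono) auto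
  then have "real h \<le> 3 * (real h * real (r div 2) / real r)" using r0 by (simp add: field_simps)
  then have C: "real h \<le> 3 * had_r r V E" using B by linarith
  have D: "real h \<le> 2 * had_r r V E" if "even r"
  proof -
    have "real (2 * (r div 2)) = real r" using that by simp
    then have "real h * real (r div 2) / real r = real h / 2" using r0 by (simp add: field_simps)
    then show ?thesis using B by linarith
  qed
  have E: "had_r r V E \<le> had_f V E" by (rule hadr_le_hadf[OF finV])
  show ?thesis using A C D E unfolding h_def by auto
qed

end
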